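(* For any positive integer $k$, as formal power series in $q$, $$\sum_{n=0}^{\infty}D_k(n)q^n=\sum_{n=0}^{\infty}q^{nk}(-q^{n+1};q)_\infty=2(-q;q)_\infty\sum_{j=0}^{k-1}(-1)^j(q^{k-j};q)_j+(-1)^k(q;q)_{k-1}.$$
   Context: $D_k(n)$ is the number of partitions of $n$ into non-negative parts (the part $0$ is allowed) in which the smallest part appears exactly $k$ times and no other part is repeated, with the convention $D_k(0)=1$. For $N\ge1$, $(a;q)_N=\prod_{i=0}^{N-1}(1-aq^i)$; also $(a;q)_0=1$ and $(a;q)_\infty=\lim_{N\to\infty}(a;q)_N$. *)

theory Defs
  imports "HOL-Computational_Algebra.Formal_Power_Series" "HOL-Library.Multiset"
begin

(* A partition of n into non-negative parts (0 allowed) is a multiset of naturals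
   with sum n. *)
definition D :: "nat \<Rightarrow> nat \<Rightarrow> nat" where
  "D k n = (if n = 0 then 1 else
     card {M :: nat multiset. M \<noteq> {#} \<and> sum_mset M = n \<and>
             count M (Min (set_mset M)) = k \<and>
             (\<forall>x \<in> set_mset M. x \<noteq> Min (set_mset M) \<longrightarrow> count M x = 1)})"

definition Dgf :: "nat \<Rightarrow> int fps" where
  "Dgf k = Abs_fps (\<lambda>n. int (D k n))"

definition qpoch :: "int fps \<Rightarrow> int fps \<Rightarrow> nat \<Rightarrow> int fps" where
  "qpoch a q N = (\<Prod>i<N. 1 - a * q ^ i)"

(* infinite q-Pochhammer symbol: limit in the fps (X-adic) metric *)
definition qpoch_inf :: "int fps \<Rightarrow> int fps \<Rightarrow> int fps" where
  "qpoch_inf a q = lim (\<lambda>N. qpoch a q N)"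

end

theory Submission imports Defs begin
unbundle fps_syntax

lemma fps_lim_lin:
  fixes f g :: "nat \<Rightarrow> int fps"
  assumes f: "f \<longlonglongrightarrow> F" and g: "g \<longlonglongrightarrow> G"
  shows "(\<lambda>M. a + b * f M - g M) \<longlonglongrightarrow> a + b * F - G"
proof (rule tendsto_fpsI)
  fix n
  have ef: "\<forall>i\<in>{..n}. eventually (\<lambda>M. f M $ i = F $ i) sequentially"
    using f unfolding tendsto_fps_iff by blast
  have e1: "eventually (\<lambda>M. \<forall>i\<in>{..n}. f M $ i = F $ i) sequentially"
    by (rule eventually_ball_finite[OF _ ef]) simp
  have e2: "eventually (\<lambda>M. g M $ n = G $ n) sequentially"
    using g unfolding tendsto_fps_iff by blast
  show "eventually (\<lambda>M. (a + b * f M - g M) $ n = (a + b * F - G) $ n) sequentially"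
    using e1 e2
  proof eventually_elim
    case (elim M)
    have "(b * f M) $ n = (b * F) $ n"
      unfolding fps_mult_nth by (rule sum.cong) (use elim in auto)
    then show ?case using elim by simp
  qed
qed

lemma fps_lim_mult:
  fixes f :: "nat \<Rightarrow> int fps"
  assumes f: "f \<longlonglongrightarrow> F"
  shows "(\<lambda>M. b * f M) \<longlonglongrightarrow> b * F"
  using fps_lim_lin[OF f tendsto_const[of 0], of 0 b] by simp

lemma prod_coeff:
  assumes "finite A"
  shows "(\<Prod>a\<in>A. 1 + fps_X ^ a :: int fps) $ n = int (card {S. S \<subseteq> A \<and> \<Sum>S = n})"
  using assms
proof (induction A arbitrary: n rule: finite_induct)
  case empty
  have "{S. S \<subseteq> {} \<and> \<Sum>S = n} = (if n = 0 then {{}} else {})" by auto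
  then show ?case by simp
next
  case (insert a A)
  have split: "{S. S \<subseteq> insert a A \<and> \<Sum>S = n} =
     {S. S \<subseteq> A \<and> \<Sum>S = n} \<union> insert a ` {S. S \<subseteq> A \<and> \<Sum>S + a = n}"
  proof (intro equalityI subsetI)
    fix S assume S: "S \<in> {S. S \<subseteq> insert a A \<and> \<Sum>S = n}"
    show "S \<in> {S. S \<subseteq> A \<and> \<Sum>S = n} \<union> insert a ` {S. S \<subseteq> A \<and> \<Sum>S + a = n}"
    proof (cases "a \<in> S")
      case True
      have fin: "finite (S - {a})" using S insert(1) finite_subset by blast
      have "\<Sum>S = a + \<Sum>(S - {a})"
        using True fin by (metis finite_Diff2 insert_Diff sum.insert_remove Diff_empty finite.emptyI finite_insert
             sum.remove)
      moreover have "S = insert a (S - {a})" using True by blast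
      ultimately show ?thesis using S by (auto intro!: image_eqI[of _ _ "S - {a}"])
    next
      case False
      then show ?thesis using S by auto
    qed
  next
    fix S assume "S \<in> {S. S \<subseteq> A \<and> \<Sum>S = n} \<union> insert a ` {S. S \<subseteq> A \<and> \<Sum>S + a = n}"
    then show "S \<in> {S. S \<subseteq> insert a A \<and> \<Sum>S = n}"
      using insert(1,2) by (auto simp: finite_subset subset_iff sum.insert_if)
  qed
  have fin1: "finite {S. S \<subseteq> A \<and> \<Sum>S = n}" using insert(1) by simp
  have fin2: "finite {S. S \<subseteq> A \<and> \<Sum>S + a = n}" using insert(1) by simp
  have disj: "{S. S \<subseteq> A \<and> \<Sum>S = n} \<inter> insert a ` {S. S \<subseteq> A \<and> \<Sum>S + a = n} = {}"
    using insert(2) by auto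
  have inj: "inj_on (insert a) {S. S \<subseteq> A \<and> \<Sum>S + a = n}"
    using insert(2) by (auto simp: inj_on_def)
  have c2: "card {S. S \<subseteq> A \<and> \<Sum>S + a = n} = (if n < a then 0 else card {S. S \<subseteq> A \<and> \<Sum>S = n - a})"
  proof (cases "n < a")
    case True
    then have "{S. S \<subseteq> A \<and> \<Sum>S + a = n} = {}" by auto
    then show ?thesis using True by simp
  next
    case False
    then have "{S. S \<subseteq> A \<and> \<Sum>S + a = n} = {S. S \<subseteq> A \<and> \<Sum>S = n - a}" by auto
    then show ?thesis using False by simp
  qed
  have "card {S. S \<subseteq> insert a A \<and> \<Sum>S = n} =
        card {S. S \<subseteq> A \<and> \<Sum>S = n} + card {S. S \<subseteq> A \<and> \<Sum>S + a = n}"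
    unfolding split using fin1 fin2 disj inj by (simp add: card_Un_disjoint card_image)
  moreover have "(\<Prod>a\<in>insert a A. 1 + fps_X ^ a :: int fps) $ n =
      (\<Prod>a\<in>A. 1 + fps_X ^ a :: int fps) $ n + (fps_X ^ a * (\<Prod>a\<in>A. 1 + fps_X ^ a :: int fps)) $ n"
    using insert(1,2) by (simp add: distrib_right)
  ultimately show ?case using insert(3) c2 by (simp add: fps_X_power_mult_nth)
qed


definition cnt :: "nat \<Rightarrow> nat \<Rightarrow> nat" where
  "cnt m n = card {S. S \<subseteq> {Suc m..n} \<and> \<Sum>S = n}"

abbreviation PP :: "nat \<Rightarrow> int fps" where
  "PP m \<equiv> qpoch_inf (- (fps_X ^ Suc m)) fps_X"

lemma qpoch_shift:
  "qpoch (- (fps_X ^ Suc m)) fps_X L = (\<Prod>a\<in>{Suc m..<Suc m + L}. 1 + fps_X ^ a :: int fps)"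
proof (induction L)
  case 0
  then show ?case by (simp add: qpoch_def)
next
  case (Suc L)
  have "qpoch (- (fps_X ^ Suc m)) fps_X (Suc L) = qpoch (- (fps_X ^ Suc m)) fps_X L * (1 + fps_X ^ (Suc m + L))"
    by (simp add: qpoch_def power_add)
  also have "\<dots> = (\<Prod>a\<in>{Suc m..<Suc m + Suc L}. 1 + fps_X ^ a :: int fps)"
    using Suc by (simp add: atLeastLessThanSuc mult.commute del: power_Suc)
  finally show ?case .
qed

lemma mem_le_sum_nat: "finite (S::nat set) \<Longrightarrow> x \<in> S \<Longrightarrow> x \<le> \<Sum>S"
  using member_le_sum[of x S "\<lambda>x. x"] by simp

lemma qpoch_nth:
  assumes "n < Suc m + L"
  shows "qpoch (- (fps_X ^ Suc m)) fps_X L $ n = int (cnt m n)"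
proof -
  have "{S. S \<subseteq> {Suc m..<Suc m + L} \<and> \<Sum>S = n} = {S. S \<subseteq> {Suc m..n} \<and> \<Sum>S = n}"
  proof (intro equalityI subsetI)
    fix S assume S: "S \<in> {S. S \<subseteq> {Suc m..<Suc m + L} \<and> \<Sum>S = n}"
    then have "finite S" using finite_subset[of S "{Suc m..<Suc m + L}"] by auto
    then show "S \<in> {S. S \<subseteq> {Suc m..n} \<and> \<Sum>S = n}"
      using S mem_le_sum_nat[of S] by fastforce
  next
    fix S assume "S \<in> {S. S \<subseteq> {Suc m..n} \<and> \<Sum>S = n}"
    then show "S \<in> {S. S \<subseteq> {Suc m..<Suc m + L} \<and> \<Sum>S = n}" using assms by auto
  qed
  moreover have "qpoch (- (fps_X ^ Suc m)) fps_X L $ n = int (card {S. S \<subseteq> {Suc m..<Suc m + L} \<and> \<Sum>S = n})"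
    unfolding qpoch_shift by (rule prod_coeff) simp
  ultimately show ?thesis unfolding cnt_def by simp
qed

lemma PP_lim: "(\<lambda>L. qpoch (- (fps_X ^ Suc m)) fps_X L) \<longlonglongrightarrow> Abs_fps (\<lambda>n. int (cnt m n))"
proof (rule tendsto_fpsI)
  fix n
  show "eventually (\<lambda>L. qpoch (- (fps_X ^ Suc m)) fps_X L $ n = Abs_fps (\<lambda>n. int (cnt m n)) $ n) sequentially"
    unfolding eventually_sequentially
    by (rule exI[of _ n]) (auto simp: qpoch_nth simp del: power_Suc)
qed

lemma PP_eq: "PP m = Abs_fps (\<lambda>n. int (cnt m n))"
  unfolding qpoch_inf_def using PP_lim by (rule limI)

lemma PP_lim': "(\<lambda>L. qpoch (- (fps_X ^ Suc m)) fps_X L) \<longlonglongrightarrow> PP m"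
  using PP_lim PP_eq by simp

lemma qpoch_rec:
  "qpoch (- (fps_X ^ Suc m)) fps_X (Suc L) = (1 + fps_X ^ Suc m) * qpoch (- (fps_X ^ Suc (Suc m))) fps_X L"
  unfolding qpoch_def prod.lessThan_Suc_shift
  by (simp add: power_add mult_ac)

lemma PP_rec: "PP m = (1 + fps_X ^ Suc m) * PP (Suc m)"
proof -
  have "(\<lambda>L. qpoch (- (fps_X ^ Suc m)) fps_X (Suc L)) \<longlonglongrightarrow> PP m"
    using PP_lim'[of m] by (rule LIMSEQ_Suc)
  moreover have "(\<lambda>L. qpoch (- (fps_X ^ Suc m)) fps_X (Suc L)) \<longlonglongrightarrow> (1 + fps_X ^ Suc m) * PP (Suc m)"
    unfolding qpoch_rec by (rule fps_lim_mult[OF PP_lim'])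
  ultimately show ?thesis by (rule LIMSEQ_unique)
qed

lemma PP_to_1: "(\<lambda>M. PP M) \<longlonglongrightarrow> 1"
proof (rule tendsto_fpsI)
  fix n
  have "cnt M n = (if n = 0 then 1 else 0)" if "n \<le> M" for M
  proof -
    have "{S. S \<subseteq> {Suc M..n} \<and> \<Sum>S = n} = (if n = 0 then {{}} else {})"
      using that by auto
    then show ?thesis unfolding cnt_def by simp
  qed
  then show "eventually (\<lambda>M. PP M $ n = 1 $ n) sequentially"
    unfolding eventually_sequentially PP_eq
    by (intro exI[of _ n]) auto
qed


definition TT :: "nat \<Rightarrow> nat \<Rightarrow> nat" where
  "TT k N = (\<Sum>m\<le>N. if m * k \<le> N then cnt m (N - m * k) else 0)"

lemma sum_mset_mset_set_nat: "finite (S::nat set) \<Longrightarrow> sum_mset (mset_set S) = \<Sum>S"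
  using sum_unfold_sum_mset[of "\<lambda>x. x" S] by simp

lemma D_eq_TT:
  assumes k: "k \<ge> 1"
  shows "D k N = TT k N"
proof (cases "N = 0")
  case True
  have "{S. S \<subseteq> {Suc 0..0} \<and> \<Sum>S = (0::nat)} = {{}}" by auto
  then show ?thesis using True by (simp add: D_def TT_def cnt_def)
next
  case False
  define Ms where "Ms = {M :: nat multiset. M \<noteq> {#} \<and> sum_mset M = N \<and>
             count M (Min (set_mset M)) = k \<and>
             (\<forall>x \<in> set_mset M. x \<noteq> Min (set_mset M) \<longrightarrow> count M x = 1)}"
  define A where "A = {m. m \<le> N \<and> m * k \<le> N}"
  define B where "B = (\<lambda>m. {S. S \<subseteq> {Suc m..N - m * k} \<and> \<Sum>S = N - m * k})"
  define f where "f = (\<lambda>M::nat multiset. (Min (set_mset M), set_mset M - {Min (set_mset M)}))"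
  define g where "g = (\<lambda>(m::nat, S). replicate_mset k m + mset_set S)"
  have sumg: "sum_mset (replicate_mset k m + mset_set S) = k * m + \<Sum>S" if "finite S" for m S
    using that by (simp add: sum_mset_mset_set_nat)
  have setg: "set_mset (replicate_mset k m + mset_set S) = insert m S" if "finite S" for m S
    using that k by auto
  have gf: "g (f M) = M" if "M \<in> Ms" for M
  proof -
    let ?m = "Min (set_mset M)"
    have M: "M \<noteq> {#}" "count M ?m = k" "\<And>x. x \<in># M \<Longrightarrow> x \<noteq> ?m \<Longrightarrow> count M x = 1"
      using that unfolding Ms_def by auto
    show ?thesis unfolding f_def g_def
    proof (simp, subst multiset_eq_iff, intro allI)
      fix x
      show "count (replicate_mset k ?m + mset_set (set_mset M - {?m})) x = count M x"
        using M by (cases "x = ?m") (auto simp: count_mset_set' not_in_iff)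
    qed
  qed
  have fM: "f M \<in> Sigma A B" if "M \<in> Ms" for M
  proof -
    let ?m = "Min (set_mset M)" and ?S = "set_mset M - {Min (set_mset M)}"
    have M: "M \<noteq> {#}" "sum_mset M = N" using that unfolding Ms_def by auto
    have "M = replicate_mset k ?m + mset_set ?S" using gf[OF that] unfolding f_def g_def by simp
    then have N: "N = k * ?m + \<Sum>?S" using M sumg[of ?S ?m] by simp
    have le: "?m \<le> x" if "x \<in># M" for x
      using that by simp
    have gt: "x > ?m" if "x \<in> ?S" for x
    proof -
      have "x \<in># M" "x \<noteq> ?m" using that by auto
      then show ?thesis using le[of x] by linarith
    qed
    have "?m \<le> k * ?m" using k by simp
    then have "?m \<le> N" using N by linarith
    moreover have "?m * k \<le> N" using N by (simp add: mult.commute)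
    moreover have "?S \<subseteq> {Suc ?m..N - ?m * k}"
    proof
      fix x assume x: "x \<in> ?S"
      have "x \<le> \<Sum>?S" using mem_le_sum_nat[of ?S x] x by simp
      then show "x \<in> {Suc ?m..N - ?m * k}" using gt[OF x] N by (auto simp: mult.commute)
    qed
    moreover have "\<Sum>?S = N - ?m * k" using N by (simp add: mult.commute)
    ultimately show ?thesis unfolding f_def A_def B_def by simp
  qed
  have fg: "f (g p) = p" and gM: "g p \<in> Ms" if "p \<in> Sigma A B" for p
  proof -
    obtain m S where p: "p = (m, S)" by (cases p)
    have mA: "m \<le> N" "m * k \<le> N" and SB: "S \<subseteq> {Suc m..N - m * k}" "\<Sum>S = N - m * k"
      using that unfolding p A_def B_def by auto
    have fin: "finite S" using SB(1) finite_subset by blast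
    have mS: "m \<notin> S" using SB(1) by auto
    have Min: "Min (insert m S) = m"
      using fin SB(1) by (auto intro!: Min_eqI)
    show "f (g p) = p" unfolding p f_def g_def using setg[OF fin] Min mS by simp
    show "g p \<in> Ms" unfolding p g_def Ms_def
      using setg[OF fin] Min mS sumg[OF fin] k mA SB fin
      by (auto simp: count_mset_set' mult.commute)
  qed
  have bij: "bij_betw f Ms (Sigma A B)"
  proof (rule bij_betw_byWitness[where f' = g])
    show "\<forall>a\<in>Ms. g (f a) = a" using gf by blast
    show "\<forall>a'\<in>Sigma A B. f (g a') = a'" using fg by blast
    show "f ` Ms \<subseteq> Sigma A B" using fM by blast
    show "g ` Sigma A B \<subseteq> Ms" using gM by blast
  qed
  have finA: "finite A" unfolding A_def by simp
  have finB: "\<forall>a\<in>A. finite (B a)" unfolding B_def by simp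
  have "card Ms = card (Sigma A B)" using bij by (rule bij_betw_same_card)
  also have "\<dots> = (\<Sum>m\<in>A. card (B m))" using finA finB by simp
  also have "\<dots> = TT k N"
  proof -
    have "A = {m \<in> {..N}. m * k \<le> N}" unfolding A_def by auto
    then have "(\<Sum>m\<in>A. card (B m)) = (\<Sum>m\<le>N. if m * k \<le> N then card (B m) else 0)"
      by (simp only: sum.inter_filter[OF finite_atMost])
    also have "\<dots> = TT k N" unfolding TT_def B_def cnt_def by simp
    finally show ?thesis .
  qed
  finally show ?thesis using False unfolding D_def Ms_def by simp
qed


lemma PP_nth: "PP m $ n = int (cnt m n)"
  unfolding PP_eq by (simp add: Abs_fps_inverse)

definition SS :: "nat \<Rightarrow> nat \<Rightarrow> int fps" where
  "SS k M = (\<Sum>m<M. fps_X ^ (m * k) * PP m)"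

lemma SS_nth:
  assumes k: "k \<ge> 1" and NM: "N < M"
  shows "SS k M $ N = int (TT k N)"
proof -
  have "SS k M $ N = (\<Sum>m<M. (if N < m * k then 0 else int (cnt m (N - m * k))))"
    unfolding SS_def fps_sum_nth fps_X_power_mult_nth PP_nth by simp
  also have "\<dots> = (\<Sum>m\<le>N. (if N < m * k then 0 else int (cnt m (N - m * k))))"
  proof (rule sum.mono_neutral_right)
    show "{..N} \<subseteq> {..<M}" using NM by auto
    show "\<forall>i\<in>{..<M} - {..N}. (if N < i * k then 0 else int (cnt i (N - i * k))) = 0"
    proof
      fix i assume "i \<in> {..<M} - {..N}"
      then have "N < i" by auto
      moreover have "i \<le> i * k" using k by simp
      ultimately have "N < i * k" by linarith
      then show "(if N < i * k then 0 else int (cnt i (N - i * k))) = 0" by simp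
    qed
  qed simp
  also have "\<dots> = int (TT k N)" unfolding TT_def of_nat_sum
    by (rule sum.cong) auto
  finally show ?thesis .
qed

lemma SS_lim:
  assumes k: "k \<ge> 1"
  shows "SS k \<longlonglongrightarrow> Dgf k"
proof (rule tendsto_fpsI)
  fix N
  show "eventually (\<lambda>M. SS k M $ N = Dgf k $ N) sequentially"
    unfolding eventually_sequentially
    by (rule exI[of _ "Suc N"]) (simp add: SS_nth[OF k] Dgf_def D_eq_TT[OF k])
qed

lemma SS_rec: "SS (Suc k) (Suc M) = 2 * PP 0 + fps_X ^ k * SS k M - SS k (Suc M)"
proof (induction M)
  case 0
  then show ?case by (simp add: SS_def)
next
  case (Suc M)
  let ?P = "PP (Suc M)"
  have e1: "(fps_X::int fps) ^ (Suc M * Suc k) = fps_X ^ (Suc M * k) * fps_X ^ Suc M"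
    by (simp add: power_add[symmetric] algebra_simps)
  have e2: "(fps_X::int fps) ^ k * fps_X ^ (M * k) = fps_X ^ (Suc M * k)"
    by (simp add: power_add[symmetric] algebra_simps)
  have key: "fps_X ^ k * (fps_X ^ (M * k) * PP M) = fps_X ^ (Suc M * k) * ?P + fps_X ^ (Suc M * Suc k) * ?P"
    unfolding e1 PP_rec[of M] mult.assoc[symmetric] e2 by (simp add: algebra_simps)
  have "SS (Suc k) (Suc (Suc M)) = SS (Suc k) (Suc M) + fps_X ^ (Suc M * Suc k) * ?P"
    unfolding SS_def by simp
  also have "\<dots> = 2 * PP 0 + fps_X ^ k * SS k M - SS k (Suc M) + fps_X ^ (Suc M * Suc k) * ?P"
    using Suc by simp
  also have "\<dots> = 2 * PP 0 + fps_X ^ k * (SS k M + fps_X ^ (M * k) * PP M) - (SS k (Suc M) + fps_X ^ (Suc M * k) * ?P)"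
    using key by (simp add: algebra_simps)
  also have "\<dots> = 2 * PP 0 + fps_X ^ k * SS k (Suc M) - SS k (Suc (Suc M))"
    unfolding SS_def by simp
  finally show ?case .
qed


lemma Dgf_1: "Dgf 1 = 2 * PP 0 - 1"
proof -
  have eq: "SS 1 (Suc M) = 2 * PP 0 + (-1) * PP M - 0" for M
    using SS_rec[of 0 M] by (simp add: SS_def)
  have "(\<lambda>M. SS 1 (Suc M)) \<longlonglongrightarrow> Dgf 1"
    using SS_lim[of 1] by (intro LIMSEQ_Suc) simp
  moreover have "(\<lambda>M. SS 1 (Suc M)) \<longlonglongrightarrow> 2 * PP 0 + (-1) * 1 - 0"
    unfolding eq by (rule fps_lim_lin[OF PP_to_1 tendsto_const])
  ultimately show ?thesis by (auto dest: LIMSEQ_unique)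
qed

lemma Dgf_rec:
  assumes k: "k \<ge> 1"
  shows "Dgf (Suc k) = 2 * PP 0 + fps_X ^ k * Dgf k - Dgf k"
proof -
  have "(\<lambda>M. SS (Suc k) (Suc M)) \<longlonglongrightarrow> Dgf (Suc k)"
    using SS_lim[of "Suc k"] by (intro LIMSEQ_Suc) simp
  moreover have "(\<lambda>M. SS (Suc k) (Suc M)) \<longlonglongrightarrow> 2 * PP 0 + fps_X ^ k * Dgf k - Dgf k"
    unfolding SS_rec
    by (rule fps_lim_lin[OF SS_lim[OF k] LIMSEQ_Suc[OF SS_lim[OF k]]])
  ultimately show ?thesis by (rule LIMSEQ_unique)
qed

lemma qpoch_Suc: "qpoch a q (Suc n) = qpoch a q n * (1 - a * q ^ n)"
  unfolding qpoch_def by simp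

definition CC :: "nat \<Rightarrow> int fps" where
  "CC k = (\<Sum>j<k. (-1) ^ j * qpoch (fps_X ^ (k - j)) fps_X j)"

lemma CC_rec: "CC (Suc k) = 1 - (1 - fps_X ^ k) * CC k"
proof -
  have t: "(-1) ^ Suc j * qpoch (fps_X ^ (Suc k - Suc j)) fps_X (Suc j) =
        - ((1 - fps_X ^ k) * ((-1) ^ j * qpoch (fps_X ^ (k - j)) (fps_X :: int fps) j))"
    if "j < k" for j
  proof -
    have "(fps_X :: int fps) ^ (k - j) * fps_X ^ j = fps_X ^ k"
      using that by (simp add: power_add[symmetric])
    then show ?thesis by (simp add: qpoch_Suc algebra_simps)
  qed
  have "CC (Suc k) = 1 + (\<Sum>j<k. (-1) ^ Suc j * qpoch (fps_X ^ (Suc k - Suc j)) fps_X (Suc j))"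
    unfolding CC_def sum.lessThan_Suc_shift by (simp add: qpoch_def)
  also have "\<dots> = 1 + (\<Sum>j<k. - ((1 - fps_X ^ k) * ((-1) ^ j * qpoch (fps_X ^ (k - j)) fps_X j)))"
    using t by (intro arg_cong2[where f = "(+)"] sum.cong) auto
  also have "\<dots> = 1 - (1 - fps_X ^ k) * CC k"
    unfolding CC_def by (simp add: sum_negf sum_distrib_left)
  finally show ?thesis .
qed

lemma Dgf_closed:
  assumes k: "k \<ge> 1"
  shows "Dgf k = 2 * PP 0 * CC k + (-1) ^ k * qpoch fps_X fps_X (k - 1)"
  using k
proof (induction k rule: dec_induct)
  case base
  show ?case using Dgf_1 by (simp add: CC_def qpoch_def)
next
  case (step k)
  obtain k' where k': "k = Suc k'" using step(1) by (cases k) auto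
  have qp: "qpoch fps_X fps_X (Suc k - 1) = qpoch fps_X fps_X (k - 1) * (1 - (fps_X :: int fps) ^ k)"
    unfolding k' by (simp add: qpoch_Suc)
  have "Dgf (Suc k) = 2 * PP 0 + fps_X ^ k * Dgf k - Dgf k" using Dgf_rec[OF step(1)] .
  also have "\<dots> = 2 * PP 0 * (1 - (1 - fps_X ^ k) * CC k) + (-1) ^ Suc k * (qpoch fps_X fps_X (k - 1) * (1 - fps_X ^ k))"
    unfolding step(3) by (simp add: algebra_simps)
  also have "\<dots> = 2 * PP 0 * CC (Suc k) + (-1) ^ Suc k * qpoch fps_X fps_X (Suc k - 1)"
    unfolding CC_rec qp ..
  finally show ?case .
qed

theorem theorem10:
  fixes k :: nat
  assumes "k \<ge> 1"
  shows "(\<lambda>n. fps_X ^ (n * k) * qpoch_inf (- (fps_X ^ (n + 1))) fps_X) sums Dgf k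
       \<and> Dgf k = 2 * qpoch_inf (- fps_X) fps_X *
                   (\<Sum>j<k. (-1) ^ j * qpoch (fps_X ^ (k - j)) fps_X j)
                 + (-1) ^ k * qpoch fps_X fps_X (k - 1)"
proof
  show "(\<lambda>n. fps_X ^ (n * k) * qpoch_inf (- (fps_X ^ (n + 1))) fps_X) sums Dgf k"
    unfolding sums_def using SS_lim[OF assms] unfolding SS_def by simp
  have "qpoch_inf (- fps_X) fps_X = PP 0" by simp
  then show "Dgf k = 2 * qpoch_inf (- fps_X) fps_X *
                   (\<Sum>j<k. (-1) ^ j * qpoch (fps_X ^ (k - j)) fps_X j)
                 + (-1) ^ k * qpoch fps_X fps_X (k - 1)"
    using Dgf_closed[OF assms] unfolding CC_def by simp
qed

end
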